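(* Let $\theta>0$, $L\ge1$, $K(x,y)=\exp(-\theta|x-y|)$ on $[0,1]$, and $\mathbf V=\operatorname{span}\{K(\cdot,j2^{-L}):j=0,1,\dots,2^L\}$. Then the $2^L+1$ functions $\psi_{01},\psi_{02}$ and $\psi_{lm}$ ($l=1,\dots,L$, $m\in\{1,3,\dots,2^l-1\}$) form an orthonormal basis of $\mathbf V$ with respect to the inner product of the reproducing kernel Hilbert space $\mathcal N_K[0,1]$ of $K$.
   Context: $\mathcal N_K[0,1]$ is the RKHS of $K$ on $[0,1]$, i.e. the completion of finite combinations $\sum_j\beta_jK(\cdot,x_j)$ under $\langle \sum_j\beta_jK(\cdot,x_j),\sum_k\beta'_kK(\cdot,x'_k)\rangle=\sum_{j,k}\beta_j\beta'_kK(x_j,x'_k)$. The functions are $\psi_{01}(x)=\dfrac{e^{-\theta x}+e^{-\theta(1-x)}}{\sqrt{2(1+e^{-\theta})}}$, $\psi_{02}(x)=\dfrac{e^{-\theta x}-e^{-\theta(1-x)}}{\sqrt{2(1-e^{-\theta})}}$, and for $l\ge1$, odd $m\in\{1,\dots,2^l-1\}$: $\psi_{lm}(x)=\sqrt{\tfrac{2}{\sinh(2^{1-l}\theta)}}\sinh(\theta(x-(m-1)2^{-l}))$ on $[(m-1)2^{-l},m2^{-l}]$, $\psi_{lm}(x)=\sqrt{\tfrac{2}{\sinh(2^{1-l}\theta)}}\sinh(\theta((m+1)2^{-l}-x))$ on $[m2^{-l},(m+1)2^{-l}]$, and $0$ elsewhere on $[0,1]$. *)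

theory Defs
  imports "HOL-Analysis.Analysis"
begin

definition Kexp :: "real \<Rightarrow> real \<Rightarrow> real \<Rightarrow> real" where
  "Kexp \<theta> x y = exp (- \<theta> * \<bar>x - y\<bar>)"

definition kernel_comb :: "(real \<Rightarrow> real \<Rightarrow> real) \<Rightarrow> real set \<Rightarrow> (real \<Rightarrow> real) \<Rightarrow> real \<Rightarrow> real" where
  "kernel_comb K X \<beta> = (\<lambda>x. \<Sum>y\<in>X. \<beta> y * K x y)"

text \<open>RKHS inner product of two finite kernel combinations:
  < sum_j beta_j K(.,x_j), sum_k beta'_k K(.,x'_k) > = sum_{j,k} beta_j beta'_k K(x_j,x'_k).\<close>
definition rkhs_ip :: "(real \<Rightarrow> real \<Rightarrow> real) \<Rightarrow> real set \<Rightarrow> (real \<Rightarrow> real) \<Rightarrow> real set \<Rightarrow> (real \<Rightarrow> real) \<Rightarrow> real" where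
  "rkhs_ip K X \<beta> X' \<beta>' = (\<Sum>y\<in>X. \<Sum>y'\<in>X'. \<beta> y * \<beta>' y' * K y y')"

definition grid :: "nat \<Rightarrow> real set" where
  "grid L = {real j / 2 ^ L | j. j \<le> 2 ^ L}"

definition psi01 :: "real \<Rightarrow> real \<Rightarrow> real" where
  "psi01 \<theta> x = (exp (- \<theta> * x) + exp (- \<theta> * (1 - x))) / sqrt (2 * (1 + exp (- \<theta>)))"

definition psi02 :: "real \<Rightarrow> real \<Rightarrow> real" where
  "psi02 \<theta> x = (exp (- \<theta> * x) - exp (- \<theta> * (1 - x))) / sqrt (2 * (1 - exp (- \<theta>)))"

definition psi_lm :: "real \<Rightarrow> nat \<Rightarrow> nat \<Rightarrow> real \<Rightarrow> real" where
  "psi_lm \<theta> l m x =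
     (let a = (real m - 1) / 2 ^ l; b = real m / 2 ^ l; c = (real m + 1) / 2 ^ l;
          s = sqrt (2 / sinh ((2 / 2 ^ l) * \<theta>))
      in if a \<le> x \<and> x \<le> b then s * sinh (\<theta> * (x - a))
         else if b \<le> x \<and> x \<le> c then s * sinh (\<theta> * (c - x))
         else 0)"

datatype basis_idx = I01 | I02 | ILM nat nat

definition basis_fun :: "real \<Rightarrow> basis_idx \<Rightarrow> real \<Rightarrow> real" where
  "basis_fun \<theta> i = (case i of I01 \<Rightarrow> psi01 \<theta> | I02 \<Rightarrow> psi02 \<theta> | ILM l m \<Rightarrow> psi_lm \<theta> l m)"

definition basis_idxs :: "nat \<Rightarrow> basis_idx set" where
  "basis_idxs L = {I01, I02} \<union> {ILM l m | l m. 1 \<le> l \<and> l \<le> L \<and> odd m \<and> 1 \<le> m \<and> m \<le> 2 ^ l - 1}"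

end

theory Submission
  imports Defs "HOL-Library.Function_Algebras"
begin

lemma sinh_r: "sinh (x::real) = (exp x - exp (-x))/2" by (simp add: sinh_def)
lemma cosh_r: "cosh (x::real) = (exp x + exp (-x))/2" by (simp add: cosh_def)

lemma hat_left:
  fixes th t h :: real
  shows "sinh (th * t) = cosh (th*h) * exp (- th * (h - t)) - exp (- th * t)/2 - exp (- th * (2*h - t))/2"
proof -
  have e1: "exp (- th * (h - t)) = exp (th*t) / exp (th*h)" by (simp add: algebra_simps exp_diff)
  have e2: "exp (- th * t) = 1 / exp (th*t)" by (simp add: exp_minus field_simps)
  have e3: "exp (- th * (2*h - t)) = exp (th*t) / (exp (th*h))^2"
    by (simp add: algebra_simps exp_diff flip: exp_double)
  have e4: "exp (- (th*h)) = 1 / exp (th*h)" by (simp add: exp_minus field_simps)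
  have e5: "exp (- (th*t)) = 1 / exp (th*t)" by (simp add: exp_minus field_simps)
  show ?thesis unfolding e1 e2 e3 sinh_r cosh_r e4 e5
    by (simp add: field_simps power2_eq_square)
qed

lemma hat_out:
  fixes th d h :: real
  shows "cosh (th*h) * exp (- th * (d + h)) - exp (- th * d)/2 - exp (- th * (d + 2*h))/2 = 0"
proof -
  have e1: "exp (- th * (d + h)) = exp (- th*d) / exp (th*h)" by (simp add: algebra_simps exp_diff)
  have e3: "exp (- th * (d + 2*h)) = exp (-th*d) / (exp (th*h))^2"
    by (simp add: algebra_simps exp_diff flip: exp_double)
  have e4: "exp (- (th*h)) = 1 / exp (th*h)" by (simp add: exp_minus field_simps)
  show ?thesis unfolding e1 e3 cosh_r e4
    by (simp add: field_simps power2_eq_square)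
qed

lemma hat_rep:
  fixes th a b c h S x :: real
  assumes h: "h > 0" and ha: "a = b - h" and hc: "c = b + h"
  shows "(if a \<le> x \<and> x \<le> b then S * sinh (th * (x - a))
          else if b \<le> x \<and> x \<le> c then S * sinh (th * (c - x)) else 0)
       = S * cosh (th*h) * exp (- th * \<bar>x - b\<bar>) + (- S/2) * exp (- th * \<bar>x - a\<bar>)
         + (- S/2) * exp (- th * \<bar>x - c\<bar>)"
proof -
  consider "x < a" | "a \<le> x \<and> x \<le> b" | "b < x \<and> x \<le> c" | "c < x" by linarith
  then show ?thesis
  proof cases
    case 1
    have "cosh (th*h) * exp (- th * ((a-x) + h)) - exp (- th * (a-x))/2 - exp (- th * ((a-x) + 2*h))/2 = 0"
      by (rule hat_out)
    moreover have "\<bar>x - b\<bar> = (a-x)+h" "\<bar>x - a\<bar> = a - x" "\<bar>x - c\<bar> = (a-x)+2*h" using 1 h ha hc by auto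
    ultimately show ?thesis using 1 h ha hc
      by (simp only: if_False) (simp add: algebra_simps; metis (no_types, lifting) add.commute mult.commute)
  next
    case 2
    have q: "h - (x-a) = \<bar>x - b\<bar>" "x - a = \<bar>x - a\<bar>" "2*h - (x-a) = \<bar>x - c\<bar>" using 2 h ha hc by auto
    have k: "sinh (th * (x-a)) = cosh (th*h) * exp (- th * \<bar>x - b\<bar>) - exp (- th * \<bar>x - a\<bar>)/2 - exp (- th * \<bar>x - c\<bar>)/2"
      using hat_left[of th "x-a" h] unfolding q(1) q(3) by (metis q(2))
    show ?thesis using 2 unfolding k by (simp add: algebra_simps)
  next
    case 3
    have q: "h - (c-x) = \<bar>x - b\<bar>" "c - x = \<bar>x - c\<bar>" "2*h - (c-x) = \<bar>x - a\<bar>" using 3 h ha hc by auto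
    have k: "sinh (th * (c-x)) = cosh (th*h) * exp (- th * \<bar>x - b\<bar>) - exp (- th * \<bar>x - c\<bar>)/2 - exp (- th * \<bar>x - a\<bar>)/2"
      using hat_left[of th "c-x" h] unfolding q(1) q(3) by (metis q(2))
    have "\<not> (a \<le> x \<and> x \<le> b)" using 3 by auto
    then show ?thesis using 3 unfolding k by (simp add: algebra_simps)
  next
    case 4
    have q: "(x-c)+h = \<bar>x - b\<bar>" "x - c = \<bar>x - c\<bar>" "(x-c)+2*h = \<bar>x - a\<bar>" using 4 h ha hc by auto
    have k: "cosh (th*h) * exp (- th * \<bar>x - b\<bar>) - exp (- th * \<bar>x - c\<bar>)/2 - exp (- th * \<bar>x - a\<bar>)/2 = 0"
      using hat_out[of th h "x-c"] unfolding q(1) q(3) by (metis q(2))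
    have n1: "\<not> (a \<le> x \<and> x \<le> b)" and n2: "\<not> (b \<le> x \<and> x \<le> c)" using 4 h ha hc by auto
    have l: "(if a \<le> x \<and> x \<le> b then S * sinh (th * (x - a))
          else if b \<le> x \<and> x \<le> c then S * sinh (th * (c - x)) else 0) = 0"
      unfolding if_not_P[OF n1] if_not_P[OF n2] ..
    have r: "S * cosh (th*h) * exp (- th * \<bar>x - b\<bar>) + (- S/2) * exp (- th * \<bar>x - a\<bar>)
         + (- S/2) * exp (- th * \<bar>x - c\<bar>) = S * (cosh (th*h) * exp (- th * \<bar>x - b\<bar>) - exp (- th * \<bar>x - c\<bar>)/2 - exp (- th * \<bar>x - a\<bar>)/2)"
      by (simp add: algebra_simps)
    show ?thesis unfolding l r k by simp
  qed
qed

definition hatf :: "real \<Rightarrow> real \<Rightarrow> real \<Rightarrow> real \<Rightarrow> real \<Rightarrow> real \<Rightarrow> real" where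
  "hatf th a b c S x = (if a \<le> x \<and> x \<le> b then S * sinh (th * (x - a))
          else if b \<le> x \<and> x \<le> c then S * sinh (th * (c - x)) else 0)"

lemma hatf_zero: "a < b \<Longrightarrow> b < c \<Longrightarrow> x \<le> a \<or> c \<le> x \<Longrightarrow> hatf th a b c S x = 0"
  unfolding hatf_def by auto

lemma hatf_left: "a \<le> x \<Longrightarrow> x \<le> b \<Longrightarrow> hatf th a b c S x = S * sinh (th * (x - a))"
  unfolding hatf_def by auto

lemma hatf_right: "b - a = c - b \<Longrightarrow> b \<le> x \<Longrightarrow> x \<le> c \<Longrightarrow> hatf th a b c S x = S * sinh (th * (c - x))"
  unfolding hatf_def by auto

lemma mid_sinh1: fixes th u hh a :: real shows "sinh (th * ((u - hh) - a)) + sinh (th * ((u + hh) - a)) = 2 * cosh (th * hh) * sinh (th * (u - a))"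
proof -
  have "th * ((u - hh) - a) = th * (u - a) - th * hh" "th * ((u + hh) - a) = th * (u - a) + th * hh"
    by (simp_all add: algebra_simps)
  then show ?thesis by (simp add: sinh_add sinh_diff)
qed

lemma mid_sinh2: fixes th u hh c :: real shows "sinh (th * (c - (u - hh))) + sinh (th * (c - (u + hh))) = 2 * cosh (th * hh) * sinh (th * (c - u))"
proof -
  have "th * (c - (u - hh)) = th * (c - u) + th * hh" "th * (c - (u + hh)) = th * (c - u) - th * hh"
    by (simp_all add: algebra_simps)
  then show ?thesis by (simp add: sinh_add sinh_diff)
qed

lemma hatf_mid:
  assumes ab: "a < b" and bc: "b < c" and eq: "b - a = c - b" and hh: "hh > 0"
    and sa: "a \<le> u - hh \<or> u + hh \<le> a" and sb: "b \<le> u - hh \<or> u + hh \<le> b"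
    and sc: "c \<le> u - hh \<or> u + hh \<le> c"
  shows "hatf th a b c S (u - hh) + hatf th a b c S (u + hh) = 2 * cosh (th * hh) * hatf th a b c S u"
proof -
  consider "u + hh \<le> a" | "a \<le> u - hh" "u + hh \<le> b" | "b \<le> u - hh" "u + hh \<le> c" | "c \<le> u - hh"
    using sa sb sc hh by linarith
  then show ?thesis
  proof cases
    case 1 then show ?thesis using ab bc hh by (simp add: hatf_zero)
  next
    case 2
    then have "hatf th a b c S (u - hh) = S * sinh (th * ((u - hh) - a))"
      "hatf th a b c S (u + hh) = S * sinh (th * ((u + hh) - a))"
      "hatf th a b c S u = S * sinh (th * (u - a))" using hh by (simp_all add: hatf_left)
    then have "hatf th a b c S (u - hh) + hatf th a b c S (u + hh) = S * (sinh (th * ((u - hh) - a)) + sinh (th * ((u + hh) - a)))"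
      "2 * cosh (th * hh) * hatf th a b c S u = S * (2 * cosh (th * hh) * sinh (th * (u - a)))"
      by (simp_all add: algebra_simps)
    then show ?thesis by (simp only: mid_sinh1)
  next
    case 3
    then have "hatf th a b c S (u - hh) = S * sinh (th * (c - (u - hh)))"
      "hatf th a b c S (u + hh) = S * sinh (th * (c - (u + hh)))"
      "hatf th a b c S u = S * sinh (th * (c - u))" using hh eq by (simp_all add: hatf_right)
    then have "hatf th a b c S (u - hh) + hatf th a b c S (u + hh) = S * (sinh (th * (c - (u - hh))) + sinh (th * (c - (u + hh))))"
      "2 * cosh (th * hh) * hatf th a b c S u = S * (2 * cosh (th * hh) * sinh (th * (c - u)))"
      by (simp_all add: algebra_simps)
    then show ?thesis by (simp only: mid_sinh2)
  next
    case 4 then show ?thesis using ab bc hh by (simp add: hatf_zero)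
  qed
qed

lemma mid_exp:
  fixes th p q u hh :: real
  shows "(p * exp (th * (u - hh)) + q * exp (- th * (u - hh))) + (p * exp (th * (u + hh)) + q * exp (- th * (u + hh)))
     = 2 * cosh (th * hh) * (p * exp (th * u) + q * exp (- th * u))"
proof -
  have e: "exp (th * (u - hh)) = exp (th*u) * exp (- (th*hh))" "exp (th * (u + hh)) = exp (th*u) * exp (th*hh)"
    "exp (- th * (u - hh)) = exp (- th*u) * exp (th*hh)" "exp (- th * (u + hh)) = exp (-th*u) * exp (- (th*hh))"
    by (simp_all add: algebra_simps flip: exp_add)
  show ?thesis unfolding e cosh_r by (simp add: algebra_simps)
qed

lemma psi01_form: "psi01 th x = (exp (- th) / sqrt (2 * (1 + exp (- th)))) * exp (th * x) + (1 / sqrt (2 * (1 + exp (- th)))) * exp (- th * x)"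
proof -
  have "exp (- th * (1 - x)) = exp (- th) * exp (th * x)" by (simp add: algebra_simps flip: exp_add)
  then show ?thesis unfolding psi01_def by (simp add: add_divide_distrib)
qed

lemma psi02_form: "psi02 th x = (- exp (- th) / sqrt (2 * (1 - exp (- th)))) * exp (th * x) + (1 / sqrt (2 * (1 - exp (- th)))) * exp (- th * x)"
proof -
  have "exp (- th * (1 - x)) = exp (- th) * exp (th * x)" by (simp add: algebra_simps flip: exp_add)
  then show ?thesis unfolding psi02_def by (simp add: diff_divide_distrib)
qed

lemma psi01_mid: "psi01 th (u - hh) + psi01 th (u + hh) = 2 * cosh (th * hh) * psi01 th u"
  unfolding psi01_form by (rule mid_exp)

lemma psi02_mid: "psi02 th (u - hh) + psi02 th (u + hh) = 2 * cosh (th * hh) * psi02 th u"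
  unfolding psi02_form by (rule mid_exp)

lemma psi_lm_hatf: "psi_lm th l m x = hatf th ((real m - 1) / 2 ^ l) (real m / 2 ^ l) ((real m + 1) / 2 ^ l)
   (sqrt (2 / sinh ((2 / 2 ^ l) * th))) x"
  unfolding psi_lm_def hatf_def Let_def ..

lemma grid_eq: "grid L = (\<lambda>j. real j / 2 ^ L) ` {..2 ^ L}"
  unfolding grid_def by auto

lemma grid_finite: "finite (grid L)"
  unfolding grid_eq by simp

lemma grid_card: "card (grid L) = 2 ^ L + 1"
proof -
  have "inj_on (\<lambda>j. real j / 2 ^ L) {..2 ^ L}" by (auto simp: inj_on_def)
  then show ?thesis unfolding grid_eq by (simp add: card_image)
qed

lemma grid_01: assumes "y \<in> grid L" shows "0 \<le> y \<and> y \<le> 1"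
proof -
  obtain j where j: "y = real j / 2 ^ L" "j \<le> 2 ^ L" using assms unfolding grid_def by auto
  have "real j \<le> 2 ^ L" using j(2) by (metis of_nat_le_iff of_nat_numeral of_nat_power)
  then show ?thesis using j(1) by simp
qed

lemma grid_mem: assumes "l \<le> L" "k \<le> 2 ^ l" shows "real k / 2 ^ l \<in> grid L"
proof -
  have p: "(2::nat) ^ L = 2 ^ l * 2 ^ (L - l)" using assms(1) by (simp flip: power_add)
  have "k * 2 ^ (L - l) \<le> 2 ^ L" using assms(2) p by simp
  moreover have "real k / 2 ^ l = real (k * 2 ^ (L - l)) / 2 ^ L"
    using p by (simp add: field_simps) (metis of_nat_mult of_nat_numeral of_nat_power)
  ultimately show ?thesis unfolding grid_def by blast
qed

lemma sum2:
  fixes g :: "real \<Rightarrow> real"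
  assumes "finite X" "p \<in> X" "q \<in> X" "p \<noteq> q"
  shows "(\<Sum>y\<in>X. (if y = p then A else if y = q then B else 0) * g y) = A * g p + B * g q"
proof -
  have "(\<Sum>y\<in>X. (if y = p then A else if y = q then B else 0) * g y)
      = (\<Sum>y\<in>X. (if y = p then A * g p else 0) + (if y = q then B * g q else 0))"
    using assms by (intro sum.cong) auto
  also have "\<dots> = A * g p + B * g q" using assms by (simp add: sum.distrib)
  finally show ?thesis .
qed

lemma sum3:
  fixes g :: "real \<Rightarrow> real"
  assumes "finite X" "p \<in> X" "q \<in> X" "r \<in> X" "p \<noteq> q" "q \<noteq> r" "p \<noteq> r"
  shows "(\<Sum>y\<in>X. (if y = q then A else if y = p \<or> y = r then B else 0) * g y) = A * g q + B * g p + B * g r"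
proof -
  have "(\<Sum>y\<in>X. (if y = q then A else if y = p \<or> y = r then B else 0) * g y)
      = (\<Sum>y\<in>X. (if y = q then A * g q else 0) + (if y = p then B * g p else 0) + (if y = r then B * g r else 0))"
    using assms by (intro sum.cong) auto
  also have "\<dots> = A * g q + B * g p + B * g r" using assms by (simp add: sum.distrib)
  finally show ?thesis .
qed

definition N1 :: "real \<Rightarrow> real" where "N1 th = sqrt (2 * (1 + exp (- th)))"
definition N2 :: "real \<Rightarrow> real" where "N2 th = sqrt (2 * (1 - exp (- th)))"
definition Sl :: "real \<Rightarrow> nat \<Rightarrow> real" where "Sl th l = sqrt (2 / sinh ((2 / 2 ^ l) * th))"

definition cf :: "real \<Rightarrow> basis_idx \<Rightarrow> real \<Rightarrow> real" where
  "cf th i = (case i of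
      I01 \<Rightarrow> (\<lambda>y. if y = 0 then 1 / N1 th else if y = 1 then 1 / N1 th else 0)
    | I02 \<Rightarrow> (\<lambda>y. if y = 0 then 1 / N2 th else if y = 1 then - 1 / N2 th else 0)
    | ILM l m \<Rightarrow> (\<lambda>y. if y = real m / 2 ^ l then Sl th l * cosh (th * (1 / 2 ^ l))
          else if y = (real m - 1) / 2 ^ l \<or> y = (real m + 1) / 2 ^ l then - Sl th l / 2 else 0))"

lemma ILM_mem: "ILM l m \<in> basis_idxs L \<longleftrightarrow> 1 \<le> l \<and> l \<le> L \<and> odd m \<and> 1 \<le> m \<and> m \<le> 2 ^ l - 1"
  unfolding basis_idxs_def by auto

lemma hat_pts:
  assumes "ILM l m \<in> basis_idxs L"
  shows "(real m - 1) / 2 ^ l \<in> grid L" "real m / 2 ^ l \<in> grid L" "(real m + 1) / 2 ^ l \<in> grid L"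
proof -
  have p: "(1::nat) \<le> 2 ^ l" by simp
  have l: "l \<le> L" "1 \<le> m" "m + 1 \<le> 2 ^ l" using assms p unfolding ILM_mem by auto
  have "real (m - 1) / 2 ^ l \<in> grid L" by (rule grid_mem) (use l in auto)
  then show "(real m - 1) / 2 ^ l \<in> grid L" using l by (simp add: of_nat_diff)
  show "real m / 2 ^ l \<in> grid L" by (rule grid_mem) (use l in auto)
  have "real (m + 1) / 2 ^ l \<in> grid L" by (rule grid_mem) (use l in auto)
  then show "(real m + 1) / 2 ^ l \<in> grid L" by (simp add: add.commute)
qed

lemma csum_ILM:
  assumes "ILM l m \<in> basis_idxs L"
  shows "(\<Sum>y\<in>grid L. cf th (ILM l m) y * g y) = Sl th l * cosh (th * (1 / 2 ^ l)) * g (real m / 2 ^ l)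
     + (- Sl th l / 2) * g ((real m - 1) / 2 ^ l) + (- Sl th l / 2) * g ((real m + 1) / 2 ^ l)"
  unfolding cf_def basis_idx.case
  by (rule sum3) (use hat_pts[OF assms] grid_finite in \<open>auto simp: divide_right_mono\<close>)

lemma zero_grid: "0 \<in> grid L" using grid_mem[of 0 L 0] by simp
lemma one_grid: "1 \<in> grid L" using grid_mem[of L L "2^L"] by simp

lemma csum_01: "(\<Sum>y\<in>grid L. cf th I01 y * g y) = 1 / N1 th * g 0 + 1 / N1 th * g 1"
  unfolding cf_def basis_idx.case by (rule sum2) (use zero_grid one_grid grid_finite in auto)

lemma csum_02: "(\<Sum>y\<in>grid L. cf th I02 y * g y) = 1 / N2 th * g 0 + - 1 / N2 th * g 1"
  unfolding cf_def basis_idx.case by (rule sum2) (use zero_grid one_grid grid_finite in auto)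

lemma rep:
  assumes "i \<in> basis_idxs L" "0 \<le> x" "x \<le> 1"
  shows "basis_fun th i x = kernel_comb (Kexp th) (grid L) (cf th i) x"
proof (cases i)
  case I01
  have k: "kernel_comb (Kexp th) (grid L) (cf th I01) x = 1 / N1 th * Kexp th x 0 + 1 / N1 th * Kexp th x 1"
    unfolding kernel_comb_def by (rule csum_01)
  show ?thesis unfolding I01 k using assms
    by (simp add: basis_fun_def psi01_def Kexp_def N1_def add_divide_distrib abs_if algebra_simps)
next
  case I02
  have k: "kernel_comb (Kexp th) (grid L) (cf th I02) x = 1 / N2 th * Kexp th x 0 + - 1 / N2 th * Kexp th x 1"
    unfolding kernel_comb_def by (rule csum_02)
  show ?thesis unfolding I02 k using assms
    by (simp add: basis_fun_def psi02_def Kexp_def N2_def diff_divide_distrib abs_if algebra_simps)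
next
  case (ILM l m)
  have "psi_lm th l m x = Sl th l * cosh (th * (1 / 2 ^ l)) * exp (- th * \<bar>x - real m / 2 ^ l\<bar>)
     + (- Sl th l / 2) * exp (- th * \<bar>x - (real m - 1) / 2 ^ l\<bar>)
     + (- Sl th l / 2) * exp (- th * \<bar>x - (real m + 1) / 2 ^ l\<bar>)"
    unfolding psi_lm_def Let_def Sl_def
    by (rule hat_rep) (simp_all add: diff_divide_distrib add_divide_distrib)
  moreover have "kernel_comb (Kexp th) (grid L) (cf th (ILM l m)) x = Sl th l * cosh (th * (1 / 2 ^ l)) * Kexp th x (real m / 2 ^ l)
     + (- Sl th l / 2) * Kexp th x ((real m - 1) / 2 ^ l) + (- Sl th l / 2) * Kexp th x ((real m + 1) / 2 ^ l)"
    unfolding kernel_comb_def by (rule csum_ILM) (use assms ILM in simp)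
  ultimately show ?thesis unfolding ILM by (simp add: basis_fun_def Kexp_def)
qed

lemma ip_eq:
  assumes "j \<in> basis_idxs L"
  shows "rkhs_ip (Kexp th) (grid L) (cf th i) (grid L) (cf th j) = (\<Sum>y\<in>grid L. cf th i y * basis_fun th j y)"
  unfolding rkhs_ip_def
proof (intro sum.cong refl)
  fix y assume y: "y \<in> grid L"
  have "(\<Sum>y'\<in>grid L. cf th i y * cf th j y' * Kexp th y y') = cf th i y * kernel_comb (Kexp th) (grid L) (cf th j) y"
    unfolding kernel_comb_def by (simp add: sum_distrib_left mult.assoc)
  also have "\<dots> = cf th i y * basis_fun th j y" using rep[OF assms] grid_01[OF y] by simp
  finally show "(\<Sum>y'\<in>grid L. cf th i y * cf th j y' * Kexp th y y') = cf th i y * basis_fun th j y" .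
qed

lemma ip_sym: "rkhs_ip (Kexp th) X a X b = rkhs_ip (Kexp th) X b X a"
  unfolding rkhs_ip_def
  by (subst sum.swap) (simp add: Kexp_def abs_minus_commute mult.commute mult.left_commute)

lemma sep:
  fixes d :: int
  assumes "l' \<le> l" "odd m" "odd m'" "l' = l \<Longrightarrow> m' \<noteq> m" "d \<in> {-1,0,1}"
  shows "real_of_int (int m' + d) / 2 ^ l' \<le> (real m - 1) / 2 ^ l \<or> (real m + 1) / 2 ^ l \<le> real_of_int (int m' + d) / 2 ^ l'"
proof -
  define K where "K = (int m' + d) * 2 ^ (l - l')"
  have ne: "K \<noteq> int m"
  proof (cases "l' < l")
    case True
    then have "even ((2::int) ^ (l - l'))" by simp
    then have "even K" unfolding K_def by simp
    then show ?thesis using assms(2) by auto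
  next
    case False
    then have ll: "l' = l" using assms(1) by simp
    then have K: "K = int m' + d" unfolding K_def by simp
    show ?thesis
    proof (cases "d = 0")
      case True then show ?thesis using K assms(4)[OF ll] by simp
    next
      case False
      then have "d = 1 \<or> d = -1" using assms(5) by auto
      then have ev: "even (int m' + d)" using assms(3) by auto
      show ?thesis
      proof
        assume "K = int m"
        then have "even (int m)" using K ev by simp
        then show False using assms(2) by simp
      qed
    qed
  qed
  then have "K \<le> int m - 1 \<or> int m + 1 \<le> K" by linarith
  then have c: "real_of_int K \<le> real m - 1 \<or> real m + 1 \<le> real_of_int K"
    by (metis of_int_1 of_int_add of_int_diff of_int_le_iff of_int_of_nat_eq)
  have p: "(2::real) ^ l = 2 ^ l' * 2 ^ (l - l')" using assms(1) by (simp flip: power_add)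
  have eq: "real_of_int (int m' + d) / 2 ^ l' = real_of_int K / 2 ^ l"
    unfolding K_def p by simp
  show ?thesis unfolding eq using c by (auto intro: divide_right_mono)
qed

lemma hat_orth:
  assumes i: "ILM l m \<in> basis_idxs L" and j: "ILM l' m' \<in> basis_idxs L" and ll: "l' \<le> l"
    and ne: "ILM l' m' \<noteq> ILM l m"
  shows "(\<Sum>y\<in>grid L. cf th (ILM l m) y * psi_lm th l' m' y) = 0"
proof -
  have mi: "odd m" using i unfolding ILM_mem by simp
  have mj: "odd m'" using j unfolding ILM_mem by simp
  have nn: "l' = l \<Longrightarrow> m' \<noteq> m" using ne by auto
  define u where "u = real m / 2 ^ l"
  define hh :: real where "hh = 1 / 2 ^ l"
  have um: "(real m - 1) / 2 ^ l = u - hh" "(real m + 1) / 2 ^ l = u + hh"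
    unfolding u_def hh_def by (simp_all add: diff_divide_distrib add_divide_distrib)
  have s1: "real_of_int (int m' + d) / 2 ^ l' \<le> u - hh \<or> u + hh \<le> real_of_int (int m' + d) / 2 ^ l'"
    if "d \<in> {-1,0,1}" for d
    using sep[OF ll mi mj nn that] unfolding um .
  have sa: "(real m' - 1) / 2 ^ l' \<le> u - hh \<or> u + hh \<le> (real m' - 1) / 2 ^ l'"
    using s1[of "-1"] by simp
  have sb: "real m' / 2 ^ l' \<le> u - hh \<or> u + hh \<le> real m' / 2 ^ l'"
    using s1[of "0"] by simp
  have sc: "(real m' + 1) / 2 ^ l' \<le> u - hh \<or> u + hh \<le> (real m' + 1) / 2 ^ l'"
    using s1[of "1"] by simp
  have mid: "psi_lm th l' m' (u - hh) + psi_lm th l' m' (u + hh) = 2 * cosh (th * hh) * psi_lm th l' m' u"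
    unfolding psi_lm_hatf
    by (rule hatf_mid) (use sa sb sc in \<open>simp_all add: hh_def divide_strict_right_mono diff_divide_distrib add_divide_distrib\<close>)
  have "(\<Sum>y\<in>grid L. cf th (ILM l m) y * psi_lm th l' m' y) = Sl th l * cosh (th * hh) * psi_lm th l' m' u
     + (- Sl th l / 2) * psi_lm th l' m' (u - hh) + (- Sl th l / 2) * psi_lm th l' m' (u + hh)"
    using csum_ILM[OF i, of th "psi_lm th l' m'"] unfolding um u_def hh_def .
  also have "\<dots> = Sl th l * (cosh (th * hh) * psi_lm th l' m' u - (psi_lm th l' m' (u - hh) + psi_lm th l' m' (u + hh)) / 2)"
    by (simp add: algebra_simps)
  also have "\<dots> = 0" unfolding mid by simp
  finally show ?thesis .
qed

lemma hat_diag: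
  assumes i: "ILM l m \<in> basis_idxs L" and th: "th > 0"
  shows "(\<Sum>y\<in>grid L. cf th (ILM l m) y * psi_lm th l m y) = 1"
proof -
  define hh :: real where "hh = 1 / 2 ^ l"
  define a where "a = (real m - 1) / 2 ^ l"
  define b where "b = real m / 2 ^ l"
  define c where "c = (real m + 1) / 2 ^ l"
  have hp: "hh > 0" unfolding hh_def by simp
  have ab: "a < b" "b < c" "b - a = hh" "c - b = hh" unfolding a_def b_def c_def hh_def
    by (simp_all add: divide_strict_right_mono diff_divide_distrib add_divide_distrib)
  have v: "psi_lm th l m a = 0" "psi_lm th l m c = 0" "psi_lm th l m b = Sl th l * sinh (th * hh)"
    unfolding psi_lm_hatf a_def[symmetric] b_def[symmetric] c_def[symmetric] Sl_def[symmetric]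
    using ab by (simp_all add: hatf_zero hatf_left)
  have "(\<Sum>y\<in>grid L. cf th (ILM l m) y * psi_lm th l m y) = Sl th l * cosh (th * hh) * psi_lm th l m b
     + (- Sl th l / 2) * psi_lm th l m a + (- Sl th l / 2) * psi_lm th l m c"
    using csum_ILM[OF i, of th "psi_lm th l m"] unfolding a_def b_def c_def hh_def .
  also have "\<dots> = (Sl th l)^2 * (sinh (2 * (th * hh)) / 2)" unfolding v sinh_double
    by (simp add: power2_eq_square)
  also have "\<dots> = 1"
  proof -
    have e: "(2 / 2 ^ l) * th = 2 * (th * hh)" unfolding hh_def by simp
    have pos: "sinh (2 * (th * hh)) > 0" using th hp by simp
    have "(Sl th l)^2 = 2 / sinh (2 * (th * hh))" unfolding Sl_def e using pos by simp
    then show ?thesis using pos th hp by simp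
  qed
  finally show ?thesis .
qed

lemma hat_orth01:
  assumes i: "ILM l m \<in> basis_idxs L" and F: "\<And>u hh. F (u - hh) + F (u + hh) = 2 * cosh (th * hh) * F u"
  shows "(\<Sum>y\<in>grid L. cf th (ILM l m) y * F y) = 0"
proof -
  define u where "u = real m / 2 ^ l"
  define hh :: real where "hh = 1 / 2 ^ l"
  have um: "(real m - 1) / 2 ^ l = u - hh" "(real m + 1) / 2 ^ l = u + hh"
    unfolding u_def hh_def by (simp_all add: diff_divide_distrib add_divide_distrib)
  have "(\<Sum>y\<in>grid L. cf th (ILM l m) y * F y) = Sl th l * cosh (th * hh) * F u
     + (- Sl th l / 2) * F (u - hh) + (- Sl th l / 2) * F (u + hh)"
    using csum_ILM[OF i, of th F] unfolding um u_def hh_def .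
  also have "\<dots> = Sl th l * (cosh (th * hh) * F u - (F (u - hh) + F (u + hh)) / 2)"
    by (simp add: algebra_simps)
  also have "\<dots> = 0" unfolding F by simp
  finally show ?thesis .
qed

definition lev :: "basis_idx \<Rightarrow> nat" where
  "lev i = (case i of I01 \<Rightarrow> 0 | I02 \<Rightarrow> 0 | ILM l m \<Rightarrow> l)"

lemma N1_sq: "(N1 th)^2 = 2 * (1 + exp (- th))"
  unfolding N1_def by (simp add: add_pos_pos)

lemma N2_sq: "th > 0 \<Longrightarrow> (N2 th)^2 = 2 * (1 - exp (- th))"
  unfolding N2_def by simp

lemma N2_pos: "th > 0 \<Longrightarrow> N2 th > 0"
  unfolding N2_def by simp

lemma N1_pos: "N1 th > 0"
  unfolding N1_def by (simp add: add_pos_pos)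

lemma ip_main:
  assumes i: "i \<in> basis_idxs L" and j: "j \<in> basis_idxs L" and lv: "lev j \<le> lev i" and th: "th > 0"
  shows "(\<Sum>y\<in>grid L. cf th i y * basis_fun th j y) = (if i = j then 1 else 0)"
proof (cases i)
  case I01
  have j2: "j = I01 \<or> j = I02" using j lv unfolding I01 lev_def basis_idxs_def by (cases j) auto
  have s: "(\<Sum>y\<in>grid L. cf th i y * basis_fun th j y) = (basis_fun th j 0 + basis_fun th j 1) / N1 th"
    unfolding I01 csum_01 by (simp add: add_divide_distrib)
  show ?thesis
  proof (cases "j = I01")
    case True
    have "(basis_fun th j 0 + basis_fun th j 1) / N1 th = 2 * (1 + exp (- th)) / (N1 th)^2"
      unfolding True basis_fun_def basis_idx.case psi01_def N1_def[symmetric]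
      by (simp add: power2_eq_square add_divide_distrib)
    also have "\<dots> = 1" unfolding N1_sq
      by (metis add_pos_pos exp_gt_zero mult_pos_pos zero_less_numeral zero_less_one divide_self order_less_irrefl)
    finally show ?thesis using s True I01 by simp
  next
    case False
    then have jj: "j = I02" using j2 by simp
    have "basis_fun th j 0 + basis_fun th j 1 = 0"
      unfolding jj basis_fun_def basis_idx.case psi02_def by (simp add: diff_divide_distrib)
    then show ?thesis using s jj I01 by simp
  qed
next
  case I02
  have j2: "j = I01 \<or> j = I02" using j lv unfolding I02 lev_def basis_idxs_def by (cases j) auto
  have s: "(\<Sum>y\<in>grid L. cf th i y * basis_fun th j y) = (basis_fun th j 0 - basis_fun th j 1) / N2 th"
    unfolding I02 csum_02 by (simp add: diff_divide_distrib)
  show ?thesis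
  proof (cases "j = I02")
    case True
    have "(basis_fun th j 0 - basis_fun th j 1) / N2 th = 2 * (1 - exp (- th)) / (N2 th)^2"
      unfolding True basis_fun_def basis_idx.case psi02_def N2_def[symmetric]
      by (simp add: power2_eq_square diff_divide_distrib)
    also have "\<dots> = 1" unfolding N2_sq[OF th] using th by simp
    finally show ?thesis using s True I02 by simp
  next
    case False
    then have jj: "j = I01" using j2 by simp
    have "basis_fun th j 0 - basis_fun th j 1 = 0"
      unfolding jj basis_fun_def basis_idx.case psi01_def by (simp add: add_divide_distrib)
    then show ?thesis using s jj I02 by simp
  qed
next
  case (ILM l m)
  note iI = ILM
  show ?thesis
  proof (cases j)
    case I01
    show ?thesis unfolding iI I01 basis_fun_def basis_idx.case
      by (simp, rule hat_orth01) (use i iI psi01_mid in auto)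
  next
    case I02
    show ?thesis unfolding iI I02 basis_fun_def basis_idx.case
      by (simp, rule hat_orth01) (use i iI psi02_mid in auto)
  next
    case (ILM l' m')
    note jI = ILM
    have ll: "l' \<le> l" using lv unfolding iI jI lev_def by simp
    show ?thesis
    proof (cases "j = i")
      case True
      then show ?thesis unfolding iI jI basis_fun_def basis_idx.case using hat_diag i iI th jI by auto
    next
      case False
      then show ?thesis unfolding iI jI basis_fun_def basis_idx.case using hat_orth[of l m L l' m' th] i j iI jI ll by auto
    qed
  qed
qed

lemma orthonormal:
  assumes i: "i \<in> basis_idxs L" and j: "j \<in> basis_idxs L" and th: "th > 0"
  shows "rkhs_ip (Kexp th) (grid L) (cf th i) (grid L) (cf th j) = (if i = j then 1 else 0)"
proof (cases "lev j \<le> lev i")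
  case True
  then show ?thesis using ip_eq[OF j] ip_main[OF i j True th] by simp
next
  case False
  then have "lev i \<le> lev j" by simp
  have "rkhs_ip (Kexp th) (grid L) (cf th i) (grid L) (cf th j) = rkhs_ip (Kexp th) (grid L) (cf th j) (grid L) (cf th i)"
    by (rule ip_sym)
  also have "\<dots> = (if j = i then 1 else 0)" using ip_eq[OF i] ip_main[OF j i \<open>lev i \<le> lev j\<close> th] by simp
  finally show ?thesis by auto
qed

lemma sum_pow_lev: "(\<Sum>l\<in>{1..L}. (2::nat) ^ (l - 1)) = 2 ^ L - 1"
proof (induction L)
  case 0 then show ?case by simp
next
  case (Suc L)
  have "{1..Suc L} = insert (Suc L) {1..L}" by auto
  then have "(\<Sum>l\<in>{1..Suc L}. (2::nat) ^ (l - 1)) = 2 ^ L + (\<Sum>l\<in>{1..L}. (2::nat) ^ (l - 1))" by simp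
  also have "\<dots> = 2 ^ L + (2 ^ L - 1)" using Suc by simp
  also have "\<dots> = 2 ^ Suc L - 1" by (simp add: Suc_leI)
  finally show ?case .
qed

lemma H_eq: "{ILM l m | l m. 1 \<le> l \<and> l \<le> L \<and> odd m \<and> 1 \<le> m \<and> m \<le> 2 ^ l - 1}
   = (\<Union>l\<in>{1..L}. (\<lambda>k. ILM l (2 * k + 1)) ` {..<2 ^ (l - 1)})"
proof (intro equalityI subsetI)
  fix x assume "x \<in> {ILM l m | l m. 1 \<le> l \<and> l \<le> L \<and> odd m \<and> 1 \<le> m \<and> m \<le> 2 ^ l - 1}"
  then obtain l m where x: "x = ILM l m" "1 \<le> l" "l \<le> L" "odd m" "m \<le> 2 ^ l - 1" by auto
  obtain k where k: "m = 2 * k + 1" using x(4) oddE by blast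
  have p: "(2::nat) ^ l = 2 * 2 ^ (l - 1)" using x(2) by (metis One_nat_def Suc_pred not_one_le_zero not_less0 power_Suc zero_less_iff_neq_zero le_less_trans less_one)
  have "k < 2 ^ (l - 1)" using x(5) k p by linarith
  then show "x \<in> (\<Union>l\<in>{1..L}. (\<lambda>k. ILM l (2 * k + 1)) ` {..<2 ^ (l - 1)})" using x k by auto
next
  fix x assume "x \<in> (\<Union>l\<in>{1..L}. (\<lambda>k. ILM l (2 * k + 1)) ` {..<2 ^ (l - 1)})"
  then obtain l k where x: "x = ILM l (2 * k + 1)" "1 \<le> l" "l \<le> L" "k < 2 ^ (l - 1)" by auto
  have p: "(2::nat) ^ l = 2 * 2 ^ (l - 1)" using x(2) by (metis One_nat_def Suc_pred not_one_le_zero not_less0 power_Suc zero_less_iff_neq_zero le_less_trans less_one)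
  have "2 * k + 1 \<le> 2 ^ l - 1" using x(4) p by linarith
  then show "x \<in> {ILM l m | l m. 1 \<le> l \<and> l \<le> L \<and> odd m \<and> 1 \<le> m \<and> m \<le> 2 ^ l - 1}" using x by auto
qed

lemma card_idxs: "card (basis_idxs L) = 2 ^ L + 1"
proof -
  define H where "H = {ILM l m | l m. 1 \<le> l \<and> l \<le> L \<and> odd m \<and> 1 \<le> m \<and> m \<le> 2 ^ l - 1}"
  have cH: "card H = 2 ^ L - 1"
  proof -
    have "card H = (\<Sum>l\<in>{1..L}. card ((\<lambda>k. ILM l (2 * k + 1)) ` {..<2 ^ (l - 1)}))"
      unfolding H_def H_eq by (rule card_UN_disjoint) auto
    also have "\<dots> = (\<Sum>l\<in>{1..L}. (2::nat) ^ (l - 1))"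
      by (intro sum.cong refl) (simp add: card_image inj_on_def)
    finally show ?thesis using sum_pow_lev by simp
  qed
  have fH: "finite H" unfolding H_def H_eq by auto
  have "basis_idxs L = insert I01 (insert I02 H)" unfolding basis_idxs_def H_def by auto
  moreover have "I01 \<notin> H" "I02 \<notin> H" unfolding H_def by auto
  ultimately have "card (basis_idxs L) = card H + 2" using fH by simp
  moreover have "(1::nat) \<le> 2 ^ L" by simp
  ultimately show ?thesis using cH by simp
qed

lemma finite_idxs: "finite (basis_idxs L)"
  using card_idxs[of L] card.infinite by fastforce

interpretation FV: vector_space "\<lambda>(r::real) (f::real\<Rightarrow>real). (\<lambda>x. r * f x)"
  by unfold_locales (auto simp: fun_eq_iff algebra_simps)

lemma fsum_apply: "(\<Sum>v\<in>S. f v) (x::'a) = (\<Sum>v\<in>S. (f v x :: real))"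
  by (induction S rule: infinite_finite_induct) auto

lemma supp_span:
  assumes "finite G" "\<And>z. z \<notin> G \<Longrightarrow> w z = 0"
  shows "w \<in> FV.span ((\<lambda>y. \<lambda>z::real. if z = y then (1::real) else 0) ` G)"
proof -
  have "w = (\<Sum>y\<in>G. (\<lambda>z. w y * (\<lambda>z. if z = y then (1::real) else 0) z))"
  proof (rule ext)
    fix z
    have "(\<Sum>y\<in>G. (\<lambda>z. w y * (\<lambda>z. if z = y then (1::real) else 0) z)) z
        = (\<Sum>y\<in>G. (if z = y then w y else 0))" unfolding fsum_apply by (intro sum.cong) auto
    also have "\<dots> = (if z \<in> G then w z else 0)" using assms(1) by (simp add: sum.delta)
    also have "\<dots> = w z" using assms(2) by auto
    finally show "w z = (\<Sum>y\<in>G. (\<lambda>z. w y * (\<lambda>z. if z = y then (1::real) else 0) z)) z" by simp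
  qed
  also have "\<dots> \<in> FV.span ((\<lambda>y. \<lambda>z::real. if z = y then (1::real) else 0) ` G)"
    by (intro FV.span_sum FV.span_scale FV.span_base) auto
  finally show ?thesis .
qed

lemma cf_supp: "i \<in> basis_idxs L \<Longrightarrow> z \<notin> grid L \<Longrightarrow> cf th i z = 0"
proof (cases i)
  case (ILM l m)
  assume "i \<in> basis_idxs L" "z \<notin> grid L"
  then show ?thesis using hat_pts[of l m L] ILM unfolding cf_def by auto
qed (auto simp: cf_def zero_grid one_grid)

lemma cf_inj: assumes "th > 0" shows "inj_on (cf th) (basis_idxs L)"
proof (rule inj_onI, rule ccontr)
  fix i j assume i: "i \<in> basis_idxs L" and j: "j \<in> basis_idxs L" and e: "cf th i = cf th j" and ne: "i \<noteq> j"
  have "rkhs_ip (Kexp th) (grid L) (cf th i) (grid L) (cf th i) = 1" using orthonormal[OF i i assms] by simp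
  moreover have "rkhs_ip (Kexp th) (grid L) (cf th i) (grid L) (cf th j) = 0" using orthonormal[OF i j assms] ne by simp
  ultimately show False using e by simp
qed

lemma spanning:
  assumes th: "th > 0"
  shows "\<exists>a :: basis_idx \<Rightarrow> real. \<forall>x\<in>{0..1}.
          kernel_comb (Kexp th) (grid L) \<beta> x = (\<Sum>i\<in>basis_idxs L. a i * basis_fun th i x)"
proof -
  define C where "C = cf th ` basis_idxs L"
  define E where "E = (\<lambda>y. \<lambda>z::real. if z = y then (1::real) else 0) ` grid L"
  define \<beta>' where "\<beta>' = (\<lambda>z. if z \<in> grid L then \<beta> z else 0)"
  have inj: "inj_on (cf th) (basis_idxs L)" by (rule cf_inj[OF th])
  have fC: "finite C" unfolding C_def using finite_idxs by simp
  have cC: "card C = 2 ^ L + 1" unfolding C_def using card_image[OF inj] card_idxs by simp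
  have fE: "finite E" unfolding E_def using grid_finite by simp
  have cE: "card E \<le> 2 ^ L + 1" unfolding E_def using card_image_le[OF grid_finite] grid_card by metis
  have CE: "C \<subseteq> FV.span E" unfolding C_def E_def
    using supp_span[OF grid_finite] cf_supp by blast
  have bE: "\<beta>' \<in> FV.span E" unfolding E_def by (rule supp_span[OF grid_finite]) (simp add: \<beta>'_def)
  have indC: "FV.independent C"
  proof (rule FV.independent_if_scalars_zero[OF fC])
    fix f v assume z: "(\<Sum>x\<in>C. (\<lambda>xa. f x * x xa)) = 0" and v: "v \<in> C"
    then obtain j where j: "j \<in> basis_idxs L" "v = cf th j" unfolding C_def by auto
    have "0 = (\<Sum>y\<in>grid L. (\<Sum>w\<in>C. (\<lambda>xa. f w * w xa)) y * basis_fun th j y)" unfolding z by simp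
    also have "\<dots> = (\<Sum>w\<in>C. f w * (\<Sum>y\<in>grid L. w y * basis_fun th j y))"
      unfolding fsum_apply by (simp add: sum_distrib_left sum_distrib_right mult.assoc sum.swap[of _ "grid L"])
    also have "\<dots> = (\<Sum>i\<in>basis_idxs L. f (cf th i) * (\<Sum>y\<in>grid L. cf th i y * basis_fun th j y))"
      unfolding C_def by (simp add: sum.reindex[OF inj])
    also have "\<dots> = (\<Sum>i\<in>basis_idxs L. f (cf th i) * (if i = j then 1 else 0))"
      by (intro sum.cong refl) (simp add: ip_eq[OF j(1), symmetric] orthonormal[OF _ j(1) th])
    also have "\<dots> = f v" using j finite_idxs by (simp add: if_distrib sum.delta' cong: if_cong)
    finally show "f v = 0" by simp
  qed
  have bC: "\<beta>' \<in> FV.span C"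
  proof (rule ccontr)
    assume nb: "\<beta>' \<notin> FV.span C"
    then have nC: "\<beta>' \<notin> C" using FV.span_base by blast
    have "FV.independent (insert \<beta>' C)" using FV.independent_insert indC nb nC by simp
    moreover have "insert \<beta>' C \<subseteq> FV.span E" using CE bE by simp
    ultimately have "card (insert \<beta>' C) \<le> card E" using FV.independent_span_bound[OF fE] by blast
    then show False using cC cE fC nC by simp
  qed
  then obtain u where u: "\<beta>' = (\<Sum>v\<in>C. (\<lambda>x. u v * v x))" using FV.span_finite[OF fC] by auto
  show ?thesis
  proof (intro exI ballI)
    fix x :: real assume x: "x \<in> {0..1}"
    have "kernel_comb (Kexp th) (grid L) \<beta> x = (\<Sum>y\<in>grid L. \<beta>' y * Kexp th x y)"
      unfolding kernel_comb_def \<beta>'_def by (intro sum.cong) auto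
    also have "\<dots> = (\<Sum>y\<in>grid L. (\<Sum>v\<in>C. u v * v y) * Kexp th x y)"
      by (subst u) (simp add: fsum_apply)
    also have "\<dots> = (\<Sum>v\<in>C. u v * kernel_comb (Kexp th) (grid L) v x)"
      unfolding kernel_comb_def by (simp add: sum_distrib_left sum_distrib_right mult.assoc sum.swap[of _ "grid L"])
    also have "\<dots> = (\<Sum>i\<in>basis_idxs L. u (cf th i) * kernel_comb (Kexp th) (grid L) (cf th i) x)"
      unfolding C_def by (simp add: sum.reindex[OF inj])
    also have "\<dots> = (\<Sum>i\<in>basis_idxs L. u (cf th i) * basis_fun th i x)"
      using x rep by (intro sum.cong refl) auto
    finally show "kernel_comb (Kexp th) (grid L) \<beta> x = (\<Sum>i\<in>basis_idxs L. u (cf th i) * basis_fun th i x)" .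
  qed
qed

theorem mainTheorem2:
  fixes \<theta> :: real and L :: nat
  assumes "\<theta> > 0" and "L \<ge> 1"
  shows "card (basis_idxs L) = 2 ^ L + 1 \<and>
    (\<exists>c :: basis_idx \<Rightarrow> real \<Rightarrow> real.
       (\<forall>i\<in>basis_idxs L. \<forall>x\<in>{0..1}.
          basis_fun \<theta> i x = kernel_comb (Kexp \<theta>) (grid L) (c i) x) \<and>
       (\<forall>i\<in>basis_idxs L. \<forall>j\<in>basis_idxs L.
          rkhs_ip (Kexp \<theta>) (grid L) (c i) (grid L) (c j) = (if i = j then 1 else 0)) \<and>
       (\<forall>\<beta> :: real \<Rightarrow> real. \<exists>a :: basis_idx \<Rightarrow> real. \<forall>x\<in>{0..1}.
          kernel_comb (Kexp \<theta>) (grid L) \<beta> x = (\<Sum>i\<in>basis_idxs L. a i * basis_fun \<theta> i x)))"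
proof (intro conjI exI[of _ "cf \<theta>"] ballI allI)
  show "card (basis_idxs L) = 2 ^ L + 1" by (rule card_idxs)
next
  fix i x assume "i \<in> basis_idxs L" "x \<in> {0..1::real}"
  then show "basis_fun \<theta> i x = kernel_comb (Kexp \<theta>) (grid L) (cf \<theta> i) x" using rep by auto
next
  fix i j assume "i \<in> basis_idxs L" "j \<in> basis_idxs L"
  then show "rkhs_ip (Kexp \<theta>) (grid L) (cf \<theta> i) (grid L) (cf \<theta> j) = (if i = j then 1 else 0)"
    using orthonormal assms(1) by blast
next
  fix \<beta> :: "real \<Rightarrow> real"
  show "\<exists>a. \<forall>x\<in>{0..1}. kernel_comb (Kexp \<theta>) (grid L) \<beta> x = (\<Sum>i\<in>basis_idxs L. a i * basis_fun \<theta> i x)"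
    by (rule spanning[OF assms(1)])
qed

end
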